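(* Let $R$ be a commutative ring and $\underline a=a_1,\dots,a_r$ an $R$-regular sequence. Suppose $B$ and $B'$ are matrices with $r$ rows and entries in $R$ such that $(\underline a\cdot B)=(\underline a\cdot B')$. Then $(\underline a\cdot B)+I_r(B)=(\underline a\cdot B')+I_r(B')$.
   Context: $(\underline a\cdot B)$ is the ideal generated by the entries of $[a_1\cdots a_r]\cdot B$; $I_r(B)$ is the ideal of $r\times r$ minors of $B$. *)

theory Defs
  imports "Jordan_Normal_Form.Determinant" "Jordan_Normal_Form.DL_Submatrix"
begin

definition ideal_gen :: "'a::comm_ring_1 set \<Rightarrow> 'a set" where
  "ideal_gen S = {x. \<exists>F c. finite F \<and> F \<subseteq> S \<and> x = (\<Sum>s\<in>F. c s * s)}"

definition regular_seq :: "(nat \<Rightarrow> 'a::comm_ring_1) \<Rightarrow> nat \<Rightarrow> bool" where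
  "regular_seq a r \<longleftrightarrow>
     (\<forall>i<r. \<forall>x. a i * x \<in> ideal_gen (a ` {..<i}) \<longrightarrow> x \<in> ideal_gen (a ` {..<i}))
     \<and> ideal_gen (a ` {..<r}) \<noteq> UNIV"

definition seq_mat_ideal :: "(nat \<Rightarrow> 'a::comm_ring_1) \<Rightarrow> nat \<Rightarrow> 'a mat \<Rightarrow> 'a set" where
  "seq_mat_ideal a r B = ideal_gen {(\<Sum>i<r. a i * B $$ (i, j)) | j. j < dim_col B}"

definition minor_ideal :: "nat \<Rightarrow> 'a::comm_ring_1 mat \<Rightarrow> 'a set" where
  "minor_ideal k B = ideal_gen {det (submatrix B I J) | I J.
       I \<subseteq> {..<dim_row B} \<and> J \<subseteq> {..<dim_col B} \<and> card I = k \<and> card J = k}"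

end

theory Submission
  imports Defs
begin

definition is_id :: "'a::comm_ring_1 set \<Rightarrow> bool" where
  "is_id T \<longleftrightarrow> 0 \<in> T \<and> (\<forall>x\<in>T. \<forall>y\<in>T. x + y \<in> T) \<and> (\<forall>x\<in>T. \<forall>c. c * x \<in> T)"

lemma is_id_sum:
  assumes "is_id T" "finite A" "\<And>i. i \<in> A \<Longrightarrow> f i \<in> T"
  shows "sum f A \<in> T"
  using assms(2,3)
proof (induction A rule: finite_induct)
  case empty then show ?case using assms(1) by (simp add: is_id_def)
next
  case (insert x F) then show ?case using assms(1) by (simp add: is_id_def)
qed

lemma igen_least:
  assumes "is_id T" "S \<subseteq> T"
  shows "ideal_gen S \<subseteq> T"
proof
  fix x assume "x \<in> ideal_gen S"
  then obtain F c where F: "finite F" "F \<subseteq> S" "x = (\<Sum>s\<in>F. c s * s)"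
    unfolding ideal_gen_def by auto
  show "x \<in> T" unfolding F(3)
    by (rule is_id_sum[OF assms(1) F(1)]) (use assms F in \<open>auto simp: is_id_def\<close>)
qed

lemma igen_base: "s \<in> S \<Longrightarrow> s \<in> ideal_gen S"
  unfolding ideal_gen_def by (rule CollectI, rule exI[of _ "{s}"], rule exI[of _ "\<lambda>_. 1"]) auto

lemma igen_is_id: "is_id (ideal_gen S)"
  unfolding is_id_def
proof (intro conjI ballI allI)
  show "0 \<in> ideal_gen S" unfolding ideal_gen_def
    by (rule CollectI, rule exI[of _ "{}"]) auto
next
  fix x y assume "x \<in> ideal_gen S" "y \<in> ideal_gen S"
  then obtain F1 c1 F2 c2 where F: "finite F1" "F1 \<subseteq> S" "x = (\<Sum>s\<in>F1. c1 s * s)"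
     "finite F2" "F2 \<subseteq> S" "y = (\<Sum>s\<in>F2. c2 s * s)"
    unfolding ideal_gen_def by auto
  let ?c = "\<lambda>s. (if s \<in> F1 then c1 s else 0) + (if s \<in> F2 then c2 s else 0)"
  have "(\<Sum>s\<in>F1 \<union> F2. ?c s * s) = (\<Sum>s\<in>F1 \<union> F2. (if s \<in> F1 then c1 s * s else 0))
      + (\<Sum>s\<in>F1 \<union> F2. (if s \<in> F2 then c2 s * s else 0))"
    by (simp only: sum.distrib[symmetric], rule sum.cong) (auto simp: distrib_right)
  also have "(\<Sum>s\<in>F1 \<union> F2. (if s \<in> F1 then c1 s * s else 0)) = x"
    using F by (simp add: sum.If_cases Int_absorb1)
  also have "(\<Sum>s\<in>F1 \<union> F2. (if s \<in> F2 then c2 s * s else 0)) = y"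
    using F by (simp add: sum.If_cases Int_absorb1)
  finally show "x + y \<in> ideal_gen S" unfolding ideal_gen_def
    using F by (intro CollectI exI[of _ "F1 \<union> F2"] exI[of _ ?c]) auto
next
  fix x c assume "x \<in> ideal_gen S"
  then obtain F c1 where F: "finite F" "F \<subseteq> S" "x = (\<Sum>s\<in>F. c1 s * s)"
    unfolding ideal_gen_def by auto
  show "c * x \<in> ideal_gen S" unfolding ideal_gen_def
    using F by (intro CollectI exI[of _ F] exI[of _ "\<lambda>s. c * c1 s"])
      (auto simp: sum_distrib_left mult.assoc)
qed

lemma igen_0: "0 \<in> ideal_gen S" using igen_is_id[of S] unfolding is_id_def by blast
lemma igen_add: "x \<in> ideal_gen S \<Longrightarrow> y \<in> ideal_gen S \<Longrightarrow> x + y \<in> ideal_gen S"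
  using igen_is_id[of S] unfolding is_id_def by blast
lemma igen_mult: "x \<in> ideal_gen S \<Longrightarrow> c * x \<in> ideal_gen S"
  using igen_is_id[of S] unfolding is_id_def by blast
lemma igen_sum: "finite A \<Longrightarrow> (\<And>i. i \<in> A \<Longrightarrow> f i \<in> ideal_gen S) \<Longrightarrow> sum f A \<in> ideal_gen S"
  using is_id_sum[OF igen_is_id] by blast
lemma igen_mono: "S \<subseteq> T \<Longrightarrow> ideal_gen S \<subseteq> ideal_gen T"
  by (rule igen_least[OF igen_is_id]) (auto intro: igen_base)
lemma igen_minus: "x \<in> ideal_gen S \<Longrightarrow> y \<in> ideal_gen S \<Longrightarrow> x - y \<in> ideal_gen S"
  using igen_add[of x S "(-1) * y"] igen_mult[of y S "-1"] by simp

lemma igen_index: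
  assumes "finite I" "x \<in> ideal_gen (g ` I)"
  shows "\<exists>e. x = (\<Sum>i\<in>I. e i * g i)"
proof -
  let ?T = "{x. \<exists>e. x = (\<Sum>i\<in>I. e i * g i)}"
  have "is_id ?T" unfolding is_id_def
  proof (intro conjI ballI allI)
    show "0 \<in> ?T" by (auto intro: exI[of _ "\<lambda>_. 0"])
  next
    fix x y assume "x \<in> ?T" "y \<in> ?T"
    then obtain e1 e2 where "x = (\<Sum>i\<in>I. e1 i * g i)" "y = (\<Sum>i\<in>I. e2 i * g i)" by auto
    then show "x + y \<in> ?T"
      by (auto intro!: exI[of _ "\<lambda>i. e1 i + e2 i"] simp: sum.distrib distrib_right)
  next
    fix x c assume "x \<in> ?T"
    then obtain e1 where "x = (\<Sum>i\<in>I. e1 i * g i)" by auto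
    then show "c * x \<in> ?T"
      by (auto intro!: exI[of _ "\<lambda>i. c * e1 i"] simp: sum_distrib_left mult.assoc)
  qed
  moreover have "g ` I \<subseteq> ?T"
  proof
    fix y assume "y \<in> g ` I"
    then obtain j where j: "j \<in> I" "y = g j" by auto
    have "(\<Sum>i\<in>I. (if i = j then 1 else 0) * g i) = g j"
    proof -
      have "(\<Sum>i\<in>I. (if i = j then 1 else 0) * g i) = (\<Sum>i\<in>I. if i = j then g i else 0)"
        by (rule sum.cong) auto
      then show ?thesis using assms(1) j by simp
    qed
    then show "y \<in> ?T" using j by (auto intro!: exI[of _ "\<lambda>i. if i = j then 1 else 0"])
  qed
  ultimately show ?thesis using igen_least assms(2) by blast
qed

lemma KZ:
  fixes a :: "nat \<Rightarrow> 'a::comm_ring_1"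
  assumes "\<forall>i<r. \<forall>x. a i * x \<in> ideal_gen (a ` {..<i}) \<longrightarrow> x \<in> ideal_gen (a ` {..<i})"
    and "(\<Sum>i<r. a i * t i) = 0"
  shows "\<exists>U. \<forall>i<r. t i = (\<Sum>j<r. (U i j - U j i) * a j)"
  using assms
proof (induction r arbitrary: t)
  case 0 then show ?case by auto
next
  case (Suc r)
  have h0: "(\<Sum>i<r. t i * a i) = (\<Sum>i<r. a i * t i)" by (simp add: mult.commute)
  have h1: "(\<Sum>i<r. a i * t i) + a r * t r = 0" using Suc.prems(2) by simp
  have h: "a r * t r + (\<Sum>i<r. t i * a i) = 0" using h0 h1 by (simp add: add.commute)
  have "a r * t r = - (\<Sum>i<r. t i * a i)" using h by (simp add: eq_neg_iff_add_eq_0)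
  also have "\<dots> \<in> ideal_gen (a ` {..<r})"
  proof -
    have "(\<Sum>i<r. t i * a i) \<in> ideal_gen (a ` {..<r})"
      by (rule igen_sum, simp, rule igen_mult, rule igen_base, auto)
    from igen_mult[OF this, of "-1"] show ?thesis by simp
  qed
  finally have "t r \<in> ideal_gen (a ` {..<r})" using Suc.prems(1) by auto
  then obtain e where e: "t r = (\<Sum>i<r. e i * a i)" using igen_index[of "{..<r}" "t r" a] by auto
  define t' where "t' i = t i + e i * a r" for i
  have "(\<Sum>i<r. a i * t' i) = (\<Sum>i<r. a i * t i) + a r * (\<Sum>i<r. e i * a i)"
    unfolding t'_def by (simp add: algebra_simps sum.distrib sum_distrib_left)
  also have "\<dots> = 0" using Suc.prems(2) e by simp
  finally obtain U' where U': "\<forall>i<r. t' i = (\<Sum>j<r. (U' i j - U' j i) * a j)"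
    using Suc.IH[of t'] Suc.prems(1) by auto
  define U where "U i j = (if i < r \<and> j < r then U' i j else if i = r \<and> j < r then e j else 0)" for i j
  show ?case
  proof (intro exI allI impI)
    fix i assume i: "i < Suc r"
    show "t i = (\<Sum>j<Suc r. (U i j - U j i) * a j)"
    proof (cases "i < r")
      case True
      have "(\<Sum>j<Suc r. (U i j - U j i) * a j) = (\<Sum>j<r. (U' i j - U' j i) * a j) - e i * a r"
        using True by (simp add: U_def)
      also have "\<dots> = t i" using U' True unfolding t'_def by (metis add_diff_cancel_right')
      finally show ?thesis by simp
    next
      case False
      then have "i = r" using i by simp
      then show ?thesis using e by (simp add: U_def)
    qed
  qed
qed

definition colrep :: "'a mat \<Rightarrow> nat \<Rightarrow> (nat \<Rightarrow> 'a) \<Rightarrow> 'a mat" where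
  "colrep M k v = mat (dim_row M) (dim_col M) (\<lambda>(p,q). if q = k then v p else M $$ (p,q))"

definition rowrep :: "'a mat \<Rightarrow> nat \<Rightarrow> (nat \<Rightarrow> 'a) \<Rightarrow> 'a mat" where
  "rowrep M j u = mat (dim_row M) (dim_col M) (\<lambda>(p,q). if p = j then u q else M $$ (p,q))"

lemma colrep_carrier[simp]: "M \<in> carrier_mat n m \<Longrightarrow> colrep M k v \<in> carrier_mat n m"
  unfolding colrep_def by auto
lemma rowrep_carrier[simp]: "M \<in> carrier_mat n m \<Longrightarrow> rowrep M k v \<in> carrier_mat n m"
  unfolding rowrep_def by auto

lemma cof_colrep:
  assumes "M \<in> carrier_mat n n"
  shows "cofactor (colrep M k v) i k = cofactor M i k"
proof -
  have "mat_delete (colrep M k v) i k = mat_delete M i k"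
    by (rule eq_matI) (use assms in \<open>auto simp: mat_delete_def colrep_def\<close>)
  then show ?thesis unfolding cofactor_def by simp
qed

lemma cof_rowrep:
  assumes "M \<in> carrier_mat n n"
  shows "cofactor (rowrep M j u) j l = cofactor M j l"
proof -
  have "mat_delete (rowrep M j u) j l = mat_delete M j l"
    by (rule eq_matI) (use assms in \<open>auto simp: mat_delete_def rowrep_def\<close>)
  then show ?thesis unfolding cofactor_def by simp
qed

lemma det_colrep:
  assumes "M \<in> carrier_mat n n" "k < n"
  shows "det (colrep M k v) = (\<Sum>i<n. v i * cofactor M i k)"
proof -
  have "det (colrep M k v) = (\<Sum>i<n. colrep M k v $$ (i,k) * cofactor (colrep M k v) i k)"
    by (rule laplace_expansion_column) (use assms in auto)
  also have "\<dots> = (\<Sum>i<n. v i * cofactor M i k)"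
  proof (rule sum.cong)
    fix i assume "i \<in> {..<n}"
    then have "colrep M k v $$ (i,k) = v i" using assms by (auto simp: colrep_def)
    then show "colrep M k v $$ (i,k) * cofactor (colrep M k v) i k = v i * cofactor M i k"
      by (simp add: cof_colrep[OF assms(1)])
  qed simp
  finally show ?thesis .
qed

lemma det_rowrep:
  assumes "M \<in> carrier_mat n n" "j < n"
  shows "det (rowrep M j u) = (\<Sum>l<n. u l * cofactor M j l)"
proof -
  have "det (rowrep M j u) = (\<Sum>l<n. rowrep M j u $$ (j,l) * cofactor (rowrep M j u) j l)"
    by (rule laplace_expansion_row) (use assms in auto)
  also have "\<dots> = (\<Sum>l<n. u l * cofactor M j l)"
  proof (rule sum.cong)
    fix l assume "l \<in> {..<n}"
    then have "rowrep M j u $$ (j,l) = u l" using assms by (auto simp: rowrep_def)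
    then show "rowrep M j u $$ (j,l) * cofactor (rowrep M j u) j l = u l * cofactor M j l"
      by (simp add: cof_rowrep[OF assms(1)])
  qed simp
  finally show ?thesis .
qed

lemma cof_row_other:
  assumes "M \<in> carrier_mat n n" "j < n" "m < n" "m \<noteq> j"
  shows "(\<Sum>l<n. M $$ (m,l) * cofactor M j l) = 0"
proof -
  have "(\<Sum>l<n. M $$ (m,l) * cofactor M j l) = det (rowrep M j (\<lambda>l. M $$ (m,l)))"
    using det_rowrep[OF assms(1,2)] by simp
  also have "\<dots> = 0"
    by (rule det_identical_rows[of _ n j m]) (use assms in \<open>auto simp: rowrep_def\<close>)
  finally show ?thesis .
qed

lemma crux:
  fixes a :: "nat \<Rightarrow> 'a::comm_ring_1"
  assumes M: "M \<in> carrier_mat n n" and k: "k < n" and i: "i < n" and j: "j < n" and ij: "i \<noteq> j"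
  shows "a j * cofactor M i k - a i * cofactor M j k
     \<in> ideal_gen ((\<lambda>l. \<Sum>m<n. a m * M $$ (m,l)) ` ({..<n} - {k}))"
proof -
  define w where "w l = (\<Sum>m<n. a m * M $$ (m,l))" for l
  define Q where "Q = colrep M k (\<lambda>p. if p = i then 1 else 0)"
  have Q: "Q \<in> carrier_mat n n" using M unfolding Q_def by simp
  define u where "u l = (if l = k then 0 else w l)" for l
  have dQ: "det (rowrep Q j u) = (\<Sum>l<n. u l * cofactor Q j l)" using det_rowrep[OF Q j] .
  note dQ
  also have "\<dots> \<in> ideal_gen (w ` ({..<n} - {k}))"
  proof (rule igen_sum)
    fix l assume l: "l \<in> {..<n}"
    show "u l * cofactor Q j l \<in> ideal_gen (w ` ({..<n} - {k}))"
    proof (cases "l = k")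
      case True then show ?thesis by (simp add: u_def igen_0)
    next
      case False
      have "w l \<in> ideal_gen (w ` ({..<n} - {k}))" using False l by (auto intro: igen_base)
      from igen_mult[OF this, of "cofactor Q j l"] show ?thesis using False by (simp add: u_def mult.commute)
    qed
  qed simp
  finally have mem: "det (rowrep Q j u) \<in> ideal_gen (w ` ({..<n} - {k}))" .
  have u: "u l = (\<Sum>m<n. a m * Q $$ (m,l)) - (if l = k then a i else 0)" if l: "l < n" for l
  proof (cases "l = k")
    case True
    have "(\<Sum>m<n. a m * Q $$ (m,l)) = (\<Sum>m<n. if m = i then a m else 0)"
      by (rule sum.cong) (use M l True in \<open>auto simp: Q_def colrep_def\<close>)
    then show ?thesis using True i by (simp add: u_def)
  next
    case False
    have "(\<Sum>m<n. a m * Q $$ (m,l)) = w l" unfolding w_def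
      by (rule sum.cong) (use M l False in \<open>auto simp: Q_def colrep_def\<close>)
    then show ?thesis using False by (simp add: u_def)
  qed
  have "(\<Sum>l<n. u l * cofactor Q j l)
     = (\<Sum>l<n. (\<Sum>m<n. a m * Q $$ (m,l)) * cofactor Q j l) - (\<Sum>l<n. (if l = k then a i else 0) * cofactor Q j l)"
    by (simp add: u left_diff_distrib sum_subtractf)
  also have "(\<Sum>l<n. (if l = k then a i else 0) * cofactor Q j l) = a i * cofactor Q j k"
  proof -
    have "(\<Sum>l<n. (if l = k then a i else 0) * cofactor Q j l) = (\<Sum>l<n. if l = k then a i * cofactor Q j l else 0)"
      by (rule sum.cong) auto
    then show ?thesis using k by simp
  qed
  also have "(\<Sum>l<n. (\<Sum>m<n. a m * Q $$ (m,l)) * cofactor Q j l)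
       = (\<Sum>m<n. a m * (\<Sum>l<n. Q $$ (m,l) * cofactor Q j l))"
  proof -
    have "(\<Sum>l<n. (\<Sum>m<n. a m * Q $$ (m,l)) * cofactor Q j l)
       = (\<Sum>l<n. \<Sum>m<n. a m * (Q $$ (m,l) * cofactor Q j l))"
      by (simp add: sum_distrib_right mult.assoc)
    also have "\<dots> = (\<Sum>m<n. \<Sum>l<n. a m * (Q $$ (m,l) * cofactor Q j l))"
      by (rule sum.swap)
    also have "\<dots> = (\<Sum>m<n. a m * (\<Sum>l<n. Q $$ (m,l) * cofactor Q j l))"
      by (simp add: sum_distrib_left)
    finally show ?thesis .
  qed
  also have "\<dots> = (\<Sum>m<n. if m = j then a m * det Q else 0)"
  proof (rule sum.cong)
    fix m assume m: "m \<in> {..<n}"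
    show "a m * (\<Sum>l<n. Q $$ (m,l) * cofactor Q j l) = (if m = j then a m * det Q else 0)"
    proof (cases "m = j")
      case True then show ?thesis using laplace_expansion_row[OF Q j] by simp
    next
      case False then show ?thesis using cof_row_other[OF Q j _ False] m by simp
    qed
  qed simp
  also have "\<dots> = a j * det Q" using j by simp
  also have "det Q = cofactor M i k"
  proof -
    have "det Q = (\<Sum>p<n. (if p = i then 1 else 0) * cofactor M p k)"
      unfolding Q_def by (rule det_colrep[OF M k])
    also have "\<dots> = (\<Sum>p<n. if p = i then cofactor M p k else 0)" by (rule sum.cong) auto
    finally show ?thesis using i by simp
  qed
  also have "cofactor Q j k = cofactor M j k" unfolding Q_def by (rule cof_colrep[OF M])
  finally show ?thesis using mem dQ unfolding w_def by simp
qed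


lemma kernel_col_det:
  fixes a :: "nat \<Rightarrow> 'a::comm_ring_1"
  assumes reg: "\<forall>i<n. \<forall>x. a i * x \<in> ideal_gen (a ` {..<i}) \<longrightarrow> x \<in> ideal_gen (a ` {..<i})"
    and M: "M \<in> carrier_mat n n" and k: "k < n"
    and ker: "(\<Sum>m<n. a m * M $$ (m,k)) = 0"
  shows "det M \<in> ideal_gen ((\<lambda>l. \<Sum>m<n. a m * M $$ (m,l)) ` ({..<n} - {k}))"
proof -
  define c where "c i = cofactor M i k" for i
  obtain U where U: "\<forall>i<n. M $$ (i,k) = (\<Sum>j<n. (U i j - U j i) * a j)"
    using KZ[OF reg, of "\<lambda>p. M $$ (p,k)"] ker by auto
  have "det M = (\<Sum>i<n. M $$ (i,k) * c i)"
    unfolding c_def by (rule laplace_expansion_column[OF M k])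
  also have "\<dots> = (\<Sum>i<n. \<Sum>j<n. (U i j - U j i) * a j * c i)"
    by (rule sum.cong) (use U in \<open>auto simp: sum_distrib_right\<close>)
  also have "\<dots> = (\<Sum>i<n. \<Sum>j<n. U i j * (a j * c i)) - (\<Sum>i<n. \<Sum>j<n. U j i * (a j * c i))"
    by (simp add: left_diff_distrib sum_subtractf mult.assoc)
  also have "(\<Sum>i<n. \<Sum>j<n. U j i * (a j * c i)) = (\<Sum>i<n. \<Sum>j<n. U i j * (a i * c j))"
    by (rule sum.swap)
  also have "(\<Sum>i<n. \<Sum>j<n. U i j * (a j * c i)) - (\<Sum>i<n. \<Sum>j<n. U i j * (a i * c j))
     = (\<Sum>i<n. \<Sum>j<n. U i j * (a j * c i - a i * c j))"
    by (simp add: right_diff_distrib sum_subtractf)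
  also have "\<dots> \<in> ideal_gen ((\<lambda>l. \<Sum>m<n. a m * M $$ (m,l)) ` ({..<n} - {k}))"
  proof (rule igen_sum, simp, rule igen_sum, simp, rule igen_mult)
    fix i j assume i: "i \<in> {..<n}" and j: "j \<in> {..<n}"
    show "a j * c i - a i * c j \<in> ideal_gen ((\<lambda>l. \<Sum>m<n. a m * M $$ (m,l)) ` ({..<n} - {k}))"
    proof (cases "i = j")
      case True then show ?thesis by (simp add: igen_0)
    next
      case False then show ?thesis unfolding c_def using crux[OF M k _ _ False] i j by auto
    qed
  qed
  finally show ?thesis .
qed


lemma pick_lessThan: "p < r \<Longrightarrow> pick {..<r} p = p"
proof -
  assume p: "p < r"
  have "{a \<in> {..<r}. a < p} = {..<p}" using p by auto
  then show ?thesis using pick_card_in_set[of p "{..<r}"] p by simp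
qed

lemma det_cols_injective:
  fixes B' :: "'a::comm_ring_1 mat"
  assumes B': "B' \<in> carrier_mat r n'" and N: "N \<in> carrier_mat r r"
    and f: "\<forall>q<r. f q < n' \<and> (\<forall>p<r. N $$ (p,q) = B' $$ (p, f q))"
    and inj: "inj_on f {..<r}"
  shows "\<exists>s. det N = s * det (submatrix B' {..<r} (f ` {..<r}))"
proof -
  define J where "J = f ` {..<r}"
  have cJ: "card J = r" unfolding J_def using card_image[OF inj] by simp
  have Jsub: "J \<subseteq> {..<n'}" unfolding J_def using f by auto
  define S where "S = submatrix B' {..<r} J"
  have c1: "{i. i < dim_row B' \<and> i \<in> {..<r}} = {..<r}" using B' by auto
  have c2: "{j. j < dim_col B' \<and> j \<in> J} = J" using B' Jsub by auto
  have S: "S \<in> carrier_mat r r" unfolding S_def carrier_mat_def using dim_submatrix[of B' "{..<r}" J] c1 c2 cJ by simp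
  have Sij: "S $$ (p,q) = B' $$ (p, pick J q)" if "p < r" "q < r" for p q
    unfolding S_def using submatrix_index[of p B' "{..<r}" q J] c1 c2 cJ that pick_lessThan by auto
  define \<sigma> where "\<sigma> q = (if q < r then card {x \<in> J. x < f q} else q)" for q
  have pick\<sigma>: "pick J (\<sigma> q) = f q" if "q < r" for q
    using pick_card_in_set[of "f q" J] that unfolding \<sigma>_def J_def by auto
  have \<sigma>lt: "\<sigma> q < r" if q: "q < r" for q
  proof -
    have fin: "finite J" unfolding J_def by simp
    have "{x \<in> J. x < f q} \<subset> J" using q unfolding J_def by auto
    then show ?thesis using psubset_card_mono[OF fin] q cJ unfolding \<sigma>_def by auto
  qed
  have inj\<sigma>: "inj_on \<sigma> {..<r}"
  proof (rule inj_onI)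
    fix x y assume "x \<in> {..<r}" "y \<in> {..<r}" "\<sigma> x = \<sigma> y"
    then have "f x = f y" using pick\<sigma> by (metis lessThan_iff)
    then show "x = y" using inj \<open>x \<in> {..<r}\<close> \<open>y \<in> {..<r}\<close> by (auto dest: inj_onD)
  qed
  have img: "\<sigma> ` {..<r} = {..<r}"
    by (rule endo_inj_surj) (use \<sigma>lt inj\<sigma> in auto)
  have perm: "\<sigma> permutes {0..<r}"
    by (rule bij_imp_permutes) (use inj\<sigma> img in \<open>auto simp: bij_betw_def atLeast0LessThan \<sigma>_def\<close>)
  have St: "transpose_mat S \<in> carrier_mat r r" using S by simp
  have eq: "transpose_mat N = mat r r (\<lambda>(i,j). transpose_mat S $$ (\<sigma> i, j))"
    by (rule eq_matI) (use N S f Sij \<sigma>lt pick\<sigma> in auto)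
  have "det N = det (transpose_mat N)" using det_transpose[OF N] by simp
  also have "\<dots> = signof \<sigma> * det (transpose_mat S)"
    unfolding eq by (rule det_permute_rows[OF St perm])
  also have "\<dots> = signof \<sigma> * det S" using det_transpose[OF S] by simp
  finally show ?thesis unfolding S_def J_def by blast
qed


lemma is_id_plus:
  assumes "is_id X" "is_id Y"
  shows "is_id {x + y | x y. x \<in> X \<and> y \<in> Y}"
  unfolding is_id_def
proof (intro conjI ballI allI)
  show "0 \<in> {x + y | x y. x \<in> X \<and> y \<in> Y}" using assms unfolding is_id_def by force
next
  fix u v assume "u \<in> {x + y | x y. x \<in> X \<and> y \<in> Y}" "v \<in> {x + y | x y. x \<in> X \<and> y \<in> Y}"
  then obtain x1 y1 x2 y2 where "u = x1 + y1" "x1 \<in> X" "y1 \<in> Y" "v = x2 + y2" "x2 \<in> X" "y2 \<in> Y" by auto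
  moreover have "u + v = (x1 + x2) + (y1 + y2)" using calculation by (simp add: ac_simps)
  ultimately show "u + v \<in> {x + y | x y. x \<in> X \<and> y \<in> Y}" using assms unfolding is_id_def by blast
next
  fix u c assume "u \<in> {x + y | x y. x \<in> X \<and> y \<in> Y}"
  then obtain x1 y1 where "u = x1 + y1" "x1 \<in> X" "y1 \<in> Y" by auto
  moreover have "c * u = c * x1 + c * y1" using calculation by (simp add: distrib_left)
  ultimately show "c * u \<in> {x + y | x y. x \<in> X \<and> y \<in> Y}" using assms unfolding is_id_def by blast
qed

lemma seq_mat_ideal_img: "seq_mat_ideal a r B = ideal_gen ((\<lambda>j. \<Sum>i<r. a i * B $$ (i, j)) ` {..<dim_col B})"
  unfolding seq_mat_ideal_def by (rule arg_cong[of _ _ ideal_gen]) auto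

lemma main_P:
  fixes a :: "nat \<Rightarrow> 'a::comm_ring_1" and B' :: "'a mat"
  assumes reg: "\<forall>i<r. \<forall>x. a i * x \<in> ideal_gen (a ` {..<i}) \<longrightarrow> x \<in> ideal_gen (a ` {..<i})"
    and B': "B' \<in> carrier_mat r n'"
  defines "A' \<equiv> seq_mat_ideal a r B'"
  defines "T \<equiv> {x + y | x y. x \<in> A' \<and> y \<in> minor_ideal r B'}"
  shows "m + d = r \<Longrightarrow> N \<in> carrier_mat r r \<Longrightarrow> (\<forall>q<r. (\<Sum>i<r. a i * N $$ (i,q)) \<in> A')
    \<Longrightarrow> (\<forall>q<m. f q < n' \<and> (\<forall>p<r. N $$ (p,q) = B' $$ (p, f q))) \<Longrightarrow> det N \<in> T"
proof (induction d arbitrary: m N f)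
  have idA: "is_id A'" unfolding A'_def seq_mat_ideal_def by (rule igen_is_id)
  have idT: "is_id T" unfolding T_def minor_ideal_def
    by (rule is_id_plus[OF idA igen_is_id])
  have AT: "A' \<subseteq> T" unfolding T_def using idT igen_0[of "{det (submatrix B' I J) | I J.
       I \<subseteq> {..<dim_row B'} \<and> J \<subseteq> {..<dim_col B'} \<and> card I = r \<and> card J = r}"]
    unfolding minor_ideal_def by force
  case 0
  then have m: "m = r" by simp
  show ?case
  proof (cases "inj_on f {..<r}")
    case True
    obtain s where s: "det N = s * det (submatrix B' {..<r} (f ` {..<r}))"
      using det_cols_injective[OF B' 0(2) _ True] 0(4) m by auto
    have "det (submatrix B' {..<r} (f ` {..<r})) \<in> minor_ideal r B'"
      unfolding minor_ideal_def
      by (rule igen_base, rule CollectI, intro exI[of _ "{..<r}"] exI[of _ "f ` {..<r}"])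
        (use B' 0(4) m True in \<open>auto simp: card_image\<close>)
    then have "det (submatrix B' {..<r} (f ` {..<r})) \<in> T"
      unfolding T_def using idA unfolding is_id_def by force
    then show ?thesis using s idT unfolding is_id_def by auto
  next
    case False
    then obtain q1 q2 where q: "q1 < r" "q2 < r" "q1 \<noteq> q2" "f q1 = f q2"
      unfolding inj_on_def by auto
    have "det N = 0"
      by (rule det_identical_columns[OF 0(2) q(3) q(1) q(2)])
        (use 0(2,4) m q in \<open>auto intro!: eq_vecI\<close>)
    then show ?thesis using idT unfolding is_id_def by simp
  qed
next
  case (Suc d)
  have idA: "is_id A'" unfolding A'_def seq_mat_ideal_def by (rule igen_is_id)
  have idT: "is_id T" unfolding T_def minor_ideal_def
    by (rule is_id_plus[OF idA igen_is_id])
  have AT: "A' \<subseteq> T" unfolding T_def using idT igen_0[of "{det (submatrix B' I J) | I J.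
       I \<subseteq> {..<dim_row B'} \<and> J \<subseteq> {..<dim_col B'} \<and> card I = r \<and> card J = r}"]
    unfolding minor_ideal_def by force
  note N = Suc.prems(2)
  have m: "m < r" using Suc.prems(1) by simp
  define g where "g l = (\<Sum>i<r. a i * B' $$ (i, l))" for l
  have A'eq: "A' = ideal_gen (g ` {..<n'})" unfolding A'_def seq_mat_ideal_img g_def using B' by simp
  obtain C where C: "(\<Sum>i<r. a i * N $$ (i,m)) = (\<Sum>l<n'. C l * g l)"
    using igen_index[of "{..<n'}" _ g] Suc.prems(3) m A'eq by auto
  define t where "t p = N $$ (p,m) - (\<Sum>l<n'. C l * B' $$ (p,l))" for p
  have "(\<Sum>p<r. a p * t p) = (\<Sum>p<r. a p * N $$ (p,m)) - (\<Sum>p<r. \<Sum>l<n'. C l * (a p * B' $$ (p,l)))"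
    unfolding t_def by (simp add: right_diff_distrib sum_subtractf sum_distrib_left ac_simps)
  also have "(\<Sum>p<r. \<Sum>l<n'. C l * (a p * B' $$ (p,l))) = (\<Sum>l<n'. \<Sum>p<r. C l * (a p * B' $$ (p,l)))"
    by (rule sum.swap)
  also have "\<dots> = (\<Sum>l<n'. C l * g l)" unfolding g_def by (simp add: sum_distrib_left)
  finally have ker: "(\<Sum>p<r. a p * t p) = 0" using C by simp
  let ?c = "\<lambda>p. cofactor N p m"
  have "det N = (\<Sum>p<r. N $$ (p,m) * ?c p)" by (rule laplace_expansion_column[OF N m])
  also have "\<dots> = (\<Sum>p<r. t p * ?c p) + (\<Sum>p<r. \<Sum>l<n'. C l * (B' $$ (p,l) * ?c p))"
  proof -
    have "N $$ (p,m) * ?c p = t p * ?c p + (\<Sum>l<n'. C l * (B' $$ (p,l) * ?c p))" for p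
    proof -
      have "(\<Sum>l<n'. C l * (B' $$ (p,l) * ?c p)) = (\<Sum>l<n'. C l * B' $$ (p,l)) * ?c p"
        by (simp add: sum_distrib_right mult.assoc)
      then show ?thesis unfolding t_def by (simp add: left_diff_distrib)
    qed
    then show ?thesis by (simp add: sum.distrib)
  qed
  also have "(\<Sum>p<r. \<Sum>l<n'. C l * (B' $$ (p,l) * ?c p)) = (\<Sum>l<n'. \<Sum>p<r. C l * (B' $$ (p,l) * ?c p))"
    by (rule sum.swap)
  also have "\<dots> = (\<Sum>l<n'. C l * det (colrep N m (\<lambda>p. B' $$ (p,l))))"
    by (simp add: det_colrep[OF N m] sum_distrib_left)
  also have "(\<Sum>p<r. t p * ?c p) = det (colrep N m t)" by (simp add: det_colrep[OF N m])
  finally have dN: "det N = det (colrep N m t) + (\<Sum>l<n'. C l * det (colrep N m (\<lambda>p. B' $$ (p,l))))" .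
  have Nt: "colrep N m t \<in> carrier_mat r r" using N by simp
  have "det (colrep N m t) \<in> ideal_gen ((\<lambda>l. \<Sum>i<r. a i * colrep N m t $$ (i,l)) ` ({..<r} - {m}))"
  proof (rule kernel_col_det[OF reg Nt m])
    have "(\<Sum>i<r. a i * colrep N m t $$ (i,m)) = (\<Sum>p<r. a p * t p)"
      by (rule sum.cong) (use N m in \<open>auto simp: colrep_def\<close>)
    then show "(\<Sum>i<r. a i * colrep N m t $$ (i,m)) = 0" using ker by simp
  qed
  also have "\<dots> \<subseteq> A'"
  proof (rule igen_least[OF idA], rule subsetI)
    fix x assume "x \<in> (\<lambda>l. \<Sum>i<r. a i * colrep N m t $$ (i,l)) ` ({..<r} - {m})"
    then obtain l where l: "l < r" "l \<noteq> m" "x = (\<Sum>i<r. a i * colrep N m t $$ (i,l))" by auto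
    have "x = (\<Sum>i<r. a i * N $$ (i,l))" unfolding l(3)
      by (rule sum.cong) (use N l in \<open>auto simp: colrep_def\<close>)
    then show "x \<in> A'" using Suc.prems(3) l by auto
  qed
  finally have t1: "det (colrep N m t) \<in> T" using AT by auto
  have t2: "det (colrep N m (\<lambda>p. B' $$ (p,l))) \<in> T" if l: "l < n'" for l
  proof (rule Suc.IH[of "Suc m" _ "f(m := l)"])
    show "Suc m + d = r" using Suc.prems(1) by simp
    show "colrep N m (\<lambda>p. B' $$ (p, l)) \<in> carrier_mat r r" using N by simp
    show "\<forall>q<r. (\<Sum>i<r. a i * colrep N m (\<lambda>p. B' $$ (p, l)) $$ (i, q)) \<in> A'"
    proof (intro allI impI)
      fix q assume q: "q < r"
      show "(\<Sum>i<r. a i * colrep N m (\<lambda>p. B' $$ (p, l)) $$ (i, q)) \<in> A'"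
      proof (cases "q = m")
        case True
        have "(\<Sum>i<r. a i * colrep N m (\<lambda>p. B' $$ (p, l)) $$ (i, q)) = g l" unfolding g_def
          by (rule sum.cong) (use N q True in \<open>auto simp: colrep_def\<close>)
        then show ?thesis unfolding A'eq using l by (auto intro: igen_base)
      next
        case False
        have "(\<Sum>i<r. a i * colrep N m (\<lambda>p. B' $$ (p, l)) $$ (i, q)) = (\<Sum>i<r. a i * N $$ (i,q))"
          by (rule sum.cong) (use N q False in \<open>auto simp: colrep_def\<close>)
        then show ?thesis using Suc.prems(3) q by auto
      qed
    qed
    show "\<forall>q<Suc m. (f(m := l)) q < n' \<and> (\<forall>p<r. colrep N m (\<lambda>p. B' $$ (p, l)) $$ (p, q) = B' $$ (p, (f(m := l)) q))"
      using Suc.prems(4) l N m by (auto simp: colrep_def less_Suc_eq)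
  qed
  have "(\<Sum>l<n'. C l * det (colrep N m (\<lambda>p. B' $$ (p,l)))) \<in> T"
    by (rule is_id_sum[OF idT]) (use t2 idT in \<open>auto simp: is_id_def\<close>)
  then show ?case using dN t1 idT unfolding is_id_def by auto
qed


lemma main_incl:
  fixes a :: "nat \<Rightarrow> 'a::comm_ring_1" and r :: nat and B B' :: "'a mat"
  assumes reg0: "regular_seq a r"
    and B: "dim_row B = r" and B': "dim_row B' = r"
    and eq: "seq_mat_ideal a r B = seq_mat_ideal a r B'"
  shows "{x + y | x y. x \<in> seq_mat_ideal a r B \<and> y \<in> minor_ideal r B}
       \<subseteq> {x + y | x y. x \<in> seq_mat_ideal a r B' \<and> y \<in> minor_ideal r B'}"
proof -
  have reg: "\<forall>i<r. \<forall>x. a i * x \<in> ideal_gen (a ` {..<i}) \<longrightarrow> x \<in> ideal_gen (a ` {..<i})"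
    using reg0 unfolding regular_seq_def by blast
  define A' where "A' = seq_mat_ideal a r B'"
  define T where "T = {x + y | x y. x \<in> A' \<and> y \<in> minor_ideal r B'}"
  have B'c: "B' \<in> carrier_mat r (dim_col B')" using B' by auto
  have idA: "is_id A'" unfolding A'_def seq_mat_ideal_def by (rule igen_is_id)
  have idT: "is_id T" unfolding T_def minor_ideal_def
    by (rule is_id_plus[OF idA igen_is_id])
  have AT: "A' \<subseteq> T" unfolding T_def using idT igen_0[of "{det (submatrix B' I J) | I J.
       I \<subseteq> {..<dim_row B'} \<and> J \<subseteq> {..<dim_col B'} \<and> card I = r \<and> card J = r}"]
    unfolding minor_ideal_def by force
  have MT: "minor_ideal r B \<subseteq> T" unfolding minor_ideal_def
  proof (rule igen_least[OF idT], rule subsetI)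
    fix x assume "x \<in> {det (submatrix B I J) | I J.
       I \<subseteq> {..<dim_row B} \<and> J \<subseteq> {..<dim_col B} \<and> card I = r \<and> card J = r}"
    then obtain I J where IJ: "x = det (submatrix B I J)" "I \<subseteq> {..<r}" "J \<subseteq> {..<dim_col B}"
      "card I = r" "card J = r" using B by auto
    have I: "I = {..<r}" using card_subset_eq[of "{..<r}" I] IJ by auto
    define S where "S = submatrix B {..<r} J"
    have c1: "{i. i < dim_row B \<and> i \<in> {..<r}} = {..<r}" using B by auto
    have c2: "{j. j < dim_col B \<and> j \<in> J} = J" using IJ by auto
    have S: "S \<in> carrier_mat r r" unfolding S_def carrier_mat_def
      using dim_submatrix[of B "{..<r}" J] c1 c2 IJ by simp
    have "det S \<in> T" unfolding T_def A'_def
    proof (rule main_P[OF reg B'c, of 0 r S])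
      show "\<forall>q<r. (\<Sum>i<r. a i * S $$ (i, q)) \<in> seq_mat_ideal a r B'"
      proof (intro allI impI)
        fix q assume q: "q < r"
        have pJ: "pick J q \<in> J" using pick_in_set[of q J] q IJ by auto
        have "(\<Sum>i<r. a i * S $$ (i, q)) = (\<Sum>i<r. a i * B $$ (i, pick J q))"
          by (rule sum.cong) (use submatrix_index[of _ B "{..<r}" q J] c1 c2 IJ q pick_lessThan
              in \<open>auto simp: S_def\<close>)
        also have "\<dots> \<in> seq_mat_ideal a r B" unfolding seq_mat_ideal_img
          by (rule igen_base) (use pJ IJ in auto)
        finally show "(\<Sum>i<r. a i * S $$ (i, q)) \<in> seq_mat_ideal a r B'" using eq by simp
      qed
    qed (use S in auto)
    then show "x \<in> T" using IJ I S_def by simp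
  qed
  show ?thesis
  proof
    fix z assume "z \<in> {x + y | x y. x \<in> seq_mat_ideal a r B \<and> y \<in> minor_ideal r B}"
    then obtain x y where "z = x + y" "x \<in> A'" "y \<in> T" using eq MT unfolding A'_def by auto
    then have "z \<in> T" using AT idT unfolding is_id_def by auto
    then show "z \<in> {x + y | x y. x \<in> seq_mat_ideal a r B' \<and> y \<in> minor_ideal r B'}"
      unfolding T_def A'_def .
  qed
qed

theorem lemma4p4:
  fixes a :: "nat \<Rightarrow> 'a::comm_ring_1" and r :: nat and B B' :: "'a mat"
  assumes "regular_seq a r"
    and "dim_row B = r" and "dim_row B' = r"
    and "seq_mat_ideal a r B = seq_mat_ideal a r B'"
  shows "{x + y | x y. x \<in> seq_mat_ideal a r B \<and> y \<in> minor_ideal r B}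
       = {x + y | x y. x \<in> seq_mat_ideal a r B' \<and> y \<in> minor_ideal r B'}"
  using main_incl[OF assms] main_incl[OF assms(1,3,2) assms(4)[symmetric]] by (rule subset_antisym)

end
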